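(* Let $\mu$ be a distribution on $\{0,1\}^{\mathbb{N}}$, let $X=(X_i)_{i\in\mathbb{N}}\sim\mu$ be defined on a probability space $(\Omega,\mathcal{F},\mathbb{P})$, and suppose $(\mathbb{N},\xi)$ is totally bounded. Suppose there exists $K\ge1$ such that for every $\varepsilon>0$ there exist events $(E_k)_{k\in\mathbb{N}}$ in $\mathcal{F}$ and a finite set $J\subset\mathbb{N}$ with: (1) $\mathbb{P}(E_k)\le\varepsilon$ for all $k\in\mathbb{N}$; (2) $\sup_{k\in\mathbb{N}}\frac{\log(k+1)}{\log(1/\mathbb{P}(E_k))}<\infty$; (3) for every $i\in\mathbb{N}$ there exist $j\in J$ and $\mathcal{K}\subset\mathbb{N}$ with $|\mathcal{K}|\le K$ and $\{X_i\neq X_j\}\subset\bigcup_{k\in\mathcal{K}}E_k$. Then $\Delta_n(\mu)\to0$ as $n\to\infty$.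
   Context: $\xi(i,j):=\mathbb{P}(X_i\neq X_j)$ for $i,j\in\mathbb{N}$; $(\mathbb{N},\xi)$ is totally bounded if for every $\varepsilon>0$ there is a finite $S\subset\mathbb{N}$ such that every $i$ has $s\in S$ with $\xi(i,s)\le\varepsilon$. For $n\ge1$, with $X^{(1)},\dots,X^{(n)}$ i.i.d. from $\mu$, $\Delta_n(\mu):=\mathbb{E}\sup_{j\in\mathbb{N}}\left|\frac1n\sum_{i=1}^nX^{(i)}_j-\mathbb{E}[X_j]\right|$. In (2), $\log(1/0)=\infty$. *)

theory Defs
  imports "HOL-Probability.Probability"
begin

text \<open>The measurable space \<open>{0,1}^\<nat>\<close>, with bits encoded as booleans
  (True = 1, False = 0) and the product sigma-algebra.\<close>
definition bin_seq :: "(nat \<Rightarrow> bool) measure" where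
  "bin_seq = PiM UNIV (\<lambda>_::nat. count_space (UNIV :: bool set))"

definition xi :: "'w measure \<Rightarrow> ('w \<Rightarrow> nat \<Rightarrow> bool) \<Rightarrow> nat \<Rightarrow> nat \<Rightarrow> real" where
  "xi M X i j = measure M {\<omega> \<in> space M. X \<omega> i \<noteq> X \<omega> j}"

definition totally_bounded_xi :: "'w measure \<Rightarrow> ('w \<Rightarrow> nat \<Rightarrow> bool) \<Rightarrow> bool" where
  "totally_bounded_xi M X \<longleftrightarrow>
     (\<forall>\<epsilon>>0. \<exists>S. finite S \<and> (\<forall>i. \<exists>s\<in>S. xi M X i s \<le> \<epsilon>))"

definition Delta :: "nat \<Rightarrow> (nat \<Rightarrow> bool) measure \<Rightarrow> real" where
  "Delta n \<mu> = (\<integral>x. (SUP j. \<bar>(\<Sum>i<n. of_bool (x i j)) / real n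
                      - (\<integral>y. of_bool (y j) \<partial>\<mu>)\<bar>) \<partial>(PiM {..<n} (\<lambda>_. \<mu>)))"

text \<open>The quantity \<open>log(k+1)/log(1/p)\<close> in the extended reals, with the convention
  \<open>log(1/0) = \<infinity>\<close> (so the ratio is 0 when p = 0), and \<open>c/0 = \<infinity>\<close> for c > 0.\<close>
definition log_ratio :: "nat \<Rightarrow> real \<Rightarrow> ereal" where
  "log_ratio k p = (if p = 0 then 0 else ereal (ln (real k + 1)) / ereal (ln (1 / p)))"

end

theory Submission
  imports Defs "HOL-Real_Asymp.Real_Asymp"
begin


lemma avg_bounds:
  fixes f :: "nat \<Rightarrow> bool"
  shows "0 \<le> (\<Sum>i<n. of_bool (f i)) / real n" "(\<Sum>i<n. of_bool (f i)) / real n \<le> (1::real)"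
proof -
  show "0 \<le> (\<Sum>i<n. of_bool (f i)) / real n" by (simp add: sum_nonneg)
  have "(\<Sum>i<n. of_bool (f i)) \<le> (\<Sum>i<n. (1::real))" by (intro sum_mono) auto
  then show "(\<Sum>i<n. of_bool (f i)) / real n \<le> (1::real)"
    by (cases "n = 0") (auto simp: divide_le_eq)
qed

lemma X_comp_meas:
  assumes "X \<in> measurable M bin_seq"
  shows "(\<lambda>\<omega>. X \<omega> j) \<in> measurable M (count_space UNIV)"
proof -
  have "(\<lambda>x::nat\<Rightarrow>bool. x j) \<in> measurable bin_seq (count_space UNIV)"
    unfolding bin_seq_def by measurable
  then show ?thesis using assms by (rule measurable_compose[rotated])
qed

lemma X_comp_borel:
  assumes "X \<in> measurable M bin_seq"
  shows "(\<lambda>\<omega>. of_bool (X \<omega> j) :: real) \<in> borel_measurable M"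
  using X_comp_meas[OF assms] by (rule measurable_compose) simp

lemma exp_bool_bounds:
  assumes "prob_space M" and m: "(\<lambda>y. of_bool (Q y)::real) \<in> borel_measurable M"
  shows "integrable M (\<lambda>y. of_bool (Q y)::real)" "0 \<le> (\<integral>y. of_bool (Q y) \<partial>M::real)"
    "(\<integral>y. of_bool (Q y) \<partial>M::real) \<le> 1"
proof -
  interpret prob_space M by fact
  show i: "integrable M (\<lambda>y. of_bool (Q y)::real)"
    by (rule integrable_const_bound[where B=1]) (auto simp: m)
  show "0 \<le> (\<integral>y. of_bool (Q y) \<partial>M::real)" by (intro integral_nonneg_AE) simp
  show "(\<integral>y. of_bool (Q y) \<partial>M::real) \<le> 1"
    by (rule integral_le_const[OF i]) simp
qed

lemma p_bounds:
  assumes "prob_space M" "X \<in> measurable M bin_seq"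
  shows "0 \<le> (\<integral>y. of_bool (X y j) \<partial>M::real)" "(\<integral>y. of_bool (X y j) \<partial>M::real) \<le> 1"
    "integrable M (\<lambda>y. of_bool (X y j)::real)"
  using exp_bool_bounds[OF assms(1) X_comp_borel[OF assms(2)]] by auto

lemma transfer:
  assumes P: "prob_space M" and XM: "X \<in> measurable M bin_seq" and mu: "\<mu> = distr M bin_seq X"
  shows "Delta n \<mu> = (\<integral>\<omega>. (SUP j. \<bar>(\<Sum>i<n. of_bool (X (\<omega> i) j)) / real n
                      - (\<integral>y. of_bool (X y j) \<partial>M)\<bar>) \<partial>(PiM {..<n} (\<lambda>_. M)))"
proof -
  have pj: "(\<integral>y. of_bool (y j) \<partial>\<mu>) = (\<integral>y. of_bool (X y j) \<partial>M :: real)" for j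
  proof -
    have "(\<lambda>x::nat\<Rightarrow>bool. of_bool (x j) :: real) \<in> borel_measurable bin_seq"
      unfolding bin_seq_def by measurable
    then show ?thesis unfolding mu by (rule integral_distr[OF XM])
  qed
  have smu: "sets \<mu> = sets bin_seq" unfolding mu by simp
  have XM': "X \<in> measurable M \<mu>" by (subst measurable_cong_sets[OF refl smu]) (rule XM)
  have pmu: "prob_space \<mu>" unfolding mu using XM P by (auto intro: prob_space.prob_space_distr)
  have mu2: "distr M \<mu> X = \<mu>"
  proof -
    have "distr M \<mu> X = distr M bin_seq X" by (rule distr_cong) (simp_all add: smu)
    then show ?thesis using mu by simp
  qed
  have eq: "PiM {..<n} (\<lambda>_. \<mu>) = distr (PiM {..<n} (\<lambda>_. M)) (PiM {..<n} (\<lambda>_. \<mu>)) (compose {..<n} X)"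
    using distr_PiM_finite_prob_space'[of "{..<n}" "\<lambda>_. M" "\<lambda>_. \<mu>" X] P pmu XM' mu2 by simp
  have sP: "sets (PiM {..<n} (\<lambda>_. \<mu>)) = sets (PiM {..<n} (\<lambda>_. bin_seq))"
    by (rule sets_PiM_cong) (auto simp: smu)
  let ?F = "\<lambda>x. (SUP j. \<bar>(\<Sum>i<n. of_bool (x i j)) / real n - (\<integral>y. of_bool (X y j) \<partial>M)\<bar>) :: real"
  have bd: "\<bar>(\<Sum>i<n. of_bool (x i j)) / real n - (\<integral>y. of_bool (X y j) \<partial>M)\<bar> \<le> 1" for x j
    using p_bounds[OF P XM, of j] avg_bounds[of "\<lambda>i. x i j" n] by linarith
  have Fm: "?F \<in> borel_measurable (PiM {..<n} (\<lambda>_. bin_seq))"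
  proof (rule borel_measurable_cSUP)
    fix j
    have "(\<lambda>x::nat\<Rightarrow>nat\<Rightarrow>bool. x i j) \<in> measurable (PiM {..<n} (\<lambda>_. bin_seq)) (count_space UNIV)" if "i < n" for i
    proof -
      have "(\<lambda>x::nat\<Rightarrow>nat\<Rightarrow>bool. x i) \<in> measurable (PiM {..<n} (\<lambda>_. bin_seq)) bin_seq"
        using that by (intro measurable_component_singleton) simp
      moreover have "(\<lambda>y::nat\<Rightarrow>bool. y j) \<in> measurable bin_seq (count_space UNIV)"
        unfolding bin_seq_def by (rule measurable_component_singleton) simp
      ultimately show ?thesis by (rule measurable_compose)
    qed
    then show "(\<lambda>x. \<bar>(\<Sum>i<n. of_bool (x i j)) / real n - (\<integral>y. of_bool (X y j) \<partial>M)\<bar>) \<in> borel_measurable (PiM {..<n} (\<lambda>_. bin_seq))"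
      by (intro borel_measurable_abs borel_measurable_diff borel_measurable_divide borel_measurable_sum) 
         (auto intro: measurable_compose)
  next
    fix x show "bdd_above (range (\<lambda>j. \<bar>(\<Sum>i<n. of_bool (x i j)) / real n - (\<integral>y. of_bool (X y j) \<partial>M)\<bar>))"
      using bd by (intro bdd_aboveI2) auto
  qed simp
  have cm: "compose {..<n} X \<in> measurable (PiM {..<n} (\<lambda>_. M)) (PiM {..<n} (\<lambda>_. \<mu>))"
    unfolding compose_def
  proof (rule measurable_restrict)
    fix i assume "i \<in> {..<n}"
    then have "(\<lambda>\<omega>. \<omega> i) \<in> measurable (PiM {..<n} (\<lambda>_. M)) M"
      using measurable_component_singleton[of i "{..<n}" "\<lambda>_. M"] by simp
    then show "(\<lambda>\<omega>. X (\<omega> i)) \<in> measurable (PiM {..<n} (\<lambda>_. M)) \<mu>" using XM' by (rule measurable_compose)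
  qed
  have Fm': "?F \<in> borel_measurable (PiM {..<n} (\<lambda>_. \<mu>))"
    by (subst measurable_cong_sets[OF sP refl]) (rule Fm)
  have "Delta n \<mu> = (\<integral>x. ?F x \<partial>(PiM {..<n} (\<lambda>_. \<mu>)))" unfolding Delta_def pj ..
  also have "\<dots> = (\<integral>x. ?F x \<partial>(distr (PiM {..<n} (\<lambda>_. M)) (PiM {..<n} (\<lambda>_. \<mu>)) (compose {..<n} X)))"
    by (simp only: eq[symmetric])
  also have "\<dots> = (\<integral>\<omega>. ?F (compose {..<n} X \<omega>) \<partial>(PiM {..<n} (\<lambda>_. M)))"
    by (rule integral_distr[OF cm Fm'])
  also have "\<dots> = (\<integral>\<omega>. (SUP j. \<bar>(\<Sum>i<n. of_bool (X (\<omega> i) j)) / real n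
                      - (\<integral>y. of_bool (X y j) \<partial>M)\<bar>) \<partial>(PiM {..<n} (\<lambda>_. M)))"
    by (intro Bochner_Integration.integral_cong refl SUP_cong arg_cong[where f=abs] arg_cong2[where f=minus] arg_cong2[where f=divide] sum.cong) (auto simp: compose_def)
  finally show ?thesis .
qed



lemma abs_le_quad: "\<bar>z::real\<bar> \<le> d + z^2 / d" if "d > 0" for z d
proof (cases "\<bar>z\<bar> \<le> d")
  case True
  have "0 \<le> z^2 / d" using that by simp
  then show ?thesis using True by linarith
next
  case False
  then have "\<bar>z\<bar> * d \<le> z^2" using that
    by (metis abs_ge_zero less_le_not_le linorder_linear mult_left_mono power2_abs power2_eq_square)
  then have "\<bar>z\<bar> \<le> z^2 / d" using that by (simp add: le_divide_eq)
  then show ?thesis using that by linarith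
qed

lemma cross_zero:
  fixes i l n :: nat
  assumes P: "prob_space M" and gm: "g \<in> borel_measurable M"
    and gb: "\<And>x. x \<in> space M \<Longrightarrow> 0 \<le> g x \<and> g x \<le> (1::real)"
    and il: "i < n" "l < n" "i \<noteq> l"
  shows "(\<integral>\<omega>. (g (\<omega> i) - (\<integral>x. g x \<partial>M)) * (g (\<omega> l) - (\<integral>x. g x \<partial>M)) \<partial>PiM {..<n} (\<lambda>_. M)) = 0"
proof -
  interpret prob_space M by fact
  interpret PP: product_prob_space "\<lambda>_::nat. M" by (rule product_prob_spaceI) (rule P)
  let ?c = "\<integral>x. g x \<partial>M"
  have gi: "integrable M g" by (rule integrable_const_bound[where B=1]) (auto simp: gm gb)
  define f where "f = (\<lambda>k::nat. if k = i \<or> k = l then (\<lambda>x. g x - ?c) else (\<lambda>_. 1::real))"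
  have fi: "integrable M (f k)" for k unfolding f_def using gi by auto
  have prodeq: "(\<Prod>k\<in>{..<n}. f k (\<omega> k)) = (g (\<omega> i) - ?c) * (g (\<omega> l) - ?c)" for \<omega>
  proof -
    have "(\<Prod>k\<in>{..<n}. f k (\<omega> k)) = (\<Prod>k\<in>{i,l}. f k (\<omega> k))"
      by (rule prod.mono_neutral_right) (use il in \<open>auto simp: f_def\<close>)
    also have "\<dots> = (g (\<omega> i) - ?c) * (g (\<omega> l) - ?c)" using il by (simp add: f_def)
    finally show ?thesis .
  qed
  have "(\<integral>\<omega>. (\<Prod>k\<in>{..<n}. f k (\<omega> k)) \<partial>PiM {..<n} (\<lambda>_. M)) = (\<Prod>k\<in>{..<n}. integral\<^sup>L M (f k))"
    by (rule PP.product_integral_prod) (auto intro: fi)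
  also have "\<dots> = 0"
  proof (rule prod_zero)
    show "\<exists>a\<in>{..<n}. integral\<^sup>L M (f a) = 0"
      using il gi by (intro bexI[of _ i]) (auto simp: f_def prob_space)
  qed simp
  finally show ?thesis by (simp add: prodeq)
qed

lemma mean_dev:
  fixes n :: nat
  assumes P: "prob_space M" and gm: "g \<in> borel_measurable M"
    and gb: "\<And>x. x \<in> space M \<Longrightarrow> 0 \<le> g x \<and> g x \<le> (1::real)"
    and n: "n > 0"
  shows "(\<integral>\<omega>. \<bar>(\<Sum>i<n. g (\<omega> i)) / real n - (\<integral>x. g x \<partial>M)\<bar> \<partial>PiM {..<n} (\<lambda>_. M)) \<le> 2 / sqrt n"
proof -
  interpret prob_space M by fact
  interpret PS: prob_space "PiM {..<n} (\<lambda>_. M)" by (rule prob_space_PiM) (rule P)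
  let ?P = "PiM {..<n} (\<lambda>_. M)"
  let ?c = "\<integral>x. g x \<partial>M"
  have c01: "0 \<le> ?c" "?c \<le> 1"
    using gb by (auto intro!: integral_nonneg_AE integral_le_const integrable_const_bound[where B=1] simp: gm)
  define h where "h = (\<lambda>i (\<omega>::nat \<Rightarrow> 'a). g (\<omega> i) - ?c)"
  have hm: "h i \<in> borel_measurable ?P" if "i < n" for i
  proof -
    have "(\<lambda>\<omega>. \<omega> i) \<in> measurable ?P M"
      using measurable_component_singleton[of i "{..<n}" "\<lambda>_. M"] that by simp
    then have "(\<lambda>\<omega>. g (\<omega> i)) \<in> borel_measurable ?P" using gm by (rule measurable_compose)
    then show ?thesis unfolding h_def by simp
  qed
  have sp: "\<omega> i \<in> space M" if "\<omega> \<in> space ?P" "i < n" for \<omega> i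
    using that by (auto simp: space_PiM PiE_iff)
  have hb: "\<bar>h i \<omega>\<bar> \<le> 1" if "\<omega> \<in> space ?P" "i < n" for \<omega> i
    using gb[OF sp[OF that]] c01 unfolding h_def by auto
  have hhi: "integrable ?P (\<lambda>\<omega>. h i \<omega> * h l \<omega>)" if "i < n" "l < n" for i l
  proof (rule PS.integrable_const_bound[where B=1])
    show "AE x in ?P. norm (h i x * h l x) \<le> 1"
    proof (rule AE_I2)
      fix x assume "x \<in> space ?P"
      then show "norm (h i x * h l x) \<le> 1"
      proof -
        have "\<bar>h i x\<bar> * \<bar>h l x\<bar> \<le> 1" using hb[of x i] hb[of x l] that \<open>x \<in> space ?P\<close>
          by (intro mult_le_one) auto
        then show ?thesis by (simp add: abs_mult)
      qed
    qed
  qed (use hm that in simp)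
  have hh: "(\<integral>\<omega>. h i \<omega> * h l \<omega> \<partial>?P) = (if l = i then (\<integral>\<omega>. h i \<omega> * h i \<omega> \<partial>?P) else 0)"
    if "i < n" "l < n" for i l
    using cross_zero[OF P gm gb that(1,2)] unfolding h_def by auto
  have hii: "(\<integral>\<omega>. h i \<omega> * h i \<omega> \<partial>?P) \<le> 1" if "i < n" for i
  proof (rule PS.integral_le_const[OF hhi[OF that that]])
    show "AE x in ?P. h i x * h i x \<le> 1"
    proof (rule AE_I2)
      fix x assume "x \<in> space ?P"
      then show "h i x * h i x \<le> 1"
      proof -
        have "\<bar>h i x\<bar> * \<bar>h i x\<bar> \<le> 1" using hb[of x i] that \<open>x \<in> space ?P\<close>
          by (intro mult_le_one) auto
        then show ?thesis by (metis abs_mult_self_eq)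
      qed
    qed
  qed
  define Z where "Z = (\<lambda>\<omega>. \<Sum>i<n. h i \<omega>)"
  have Z2: "Z \<omega> ^ 2 = (\<Sum>i<n. \<Sum>l<n. h i \<omega> * h l \<omega>)" for \<omega>
    unfolding Z_def power2_eq_square sum_product ..
  have Zm: "Z \<in> borel_measurable ?P" unfolding Z_def using hm by (intro borel_measurable_sum) auto
  have IZ2: "(\<integral>\<omega>. Z \<omega> ^ 2 \<partial>?P) \<le> real n"
  proof -
    have "(\<integral>\<omega>. Z \<omega> ^ 2 \<partial>?P) = (\<integral>\<omega>. (\<Sum>i<n. \<Sum>l<n. h i \<omega> * h l \<omega>) \<partial>?P)"
      by (simp only: Z2)
    also have "\<dots> = (\<Sum>i<n. (\<integral>\<omega>. (\<Sum>l<n. h i \<omega> * h l \<omega>) \<partial>?P))"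
      by (rule Bochner_Integration.integral_sum) (intro Bochner_Integration.integrable_sum hhi; simp)
    also have "\<dots> = (\<Sum>i<n. \<Sum>l<n. (\<integral>\<omega>. h i \<omega> * h l \<omega> \<partial>?P))"
      by (intro sum.cong refl Bochner_Integration.integral_sum hhi) simp_all
    also have "\<dots> = (\<Sum>i<n. (\<integral>\<omega>. h i \<omega> * h i \<omega> \<partial>?P))"
    proof (intro sum.cong refl)
      fix i assume i: "i \<in> {..<n}"
      have "(\<Sum>l<n. (\<integral>\<omega>. h i \<omega> * h l \<omega> \<partial>?P)) = (\<Sum>l<n. if l = i then (\<integral>\<omega>. h i \<omega> * h i \<omega> \<partial>?P) else 0)"
        by (intro sum.cong refl hh) (use i in auto)
      also have "\<dots> = (\<integral>\<omega>. h i \<omega> * h i \<omega> \<partial>?P)" using i by (simp add: sum.delta')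
      finally show "(\<Sum>l<n. (\<integral>\<omega>. h i \<omega> * h l \<omega> \<partial>?P)) = (\<integral>\<omega>. h i \<omega> * h i \<omega> \<partial>?P)" .
    qed
    also have "\<dots> \<le> (\<Sum>i<n. 1)" by (intro sum_mono hii) auto
    finally show ?thesis by simp
  qed
  define Y where "Y = (\<lambda>\<omega>. (\<Sum>i<n. g (\<omega> i)) / real n - ?c)"
  have YZ: "Y \<omega> = Z \<omega> / real n" for \<omega>
  proof -
    have "Z \<omega> = (\<Sum>i<n. g (\<omega> i)) - real n * ?c" unfolding Z_def h_def by (simp add: sum_subtractf)
    then show ?thesis using n unfolding Y_def by (simp add: diff_divide_distrib)
  qed
  have Ym: "Y \<in> borel_measurable ?P" unfolding YZ[abs_def] using Zm by simp
  have Yb: "\<bar>Y \<omega>\<bar> \<le> 1" if "\<omega> \<in> space ?P" for \<omega>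
  proof -
    have "\<bar>Z \<omega>\<bar> \<le> (\<Sum>i<n. \<bar>h i \<omega>\<bar>)" unfolding Z_def by (rule sum_abs)
    also have "\<dots> \<le> (\<Sum>i<n. 1)" using hb[OF that] by (intro sum_mono) auto
    finally show ?thesis using n unfolding YZ by (simp add: divide_le_eq)
  qed
  have Y2b: "Y \<omega> ^ 2 \<le> 1" if "\<omega> \<in> space ?P" for \<omega>
  proof -
    have "\<bar>Y \<omega>\<bar> ^ 2 \<le> 1" using Yb[OF that] by (intro power_le_one) auto
    then show ?thesis by simp
  qed
  have Y2i: "integrable ?P (\<lambda>\<omega>. Y \<omega> ^ 2)"
    by (rule PS.integrable_const_bound[where B=1]) (auto intro!: AE_I2 borel_measurable_power simp: Y2b Ym)
  have IY2: "(\<integral>\<omega>. Y \<omega> ^ 2 \<partial>?P) \<le> 1 / real n"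
  proof -
    have "(\<integral>\<omega>. Y \<omega> ^ 2 \<partial>?P) = (\<integral>\<omega>. Z \<omega> ^ 2 \<partial>?P) / (real n)^2"
      unfolding YZ by (simp add: power_divide)
    also have "\<dots> \<le> real n / (real n)^2" using IZ2 by (intro divide_right_mono) auto
    also have "\<dots> = 1 / real n" by (simp add: power2_eq_square)
    finally show ?thesis .
  qed
  define d where "d = 1 / sqrt (real n)"
  have d0: "d > 0" using n by (simp add: d_def)
  have "(\<integral>\<omega>. \<bar>Y \<omega>\<bar> \<partial>?P) \<le> (\<integral>\<omega>. d + Y \<omega> ^ 2 / d \<partial>?P)"
  proof (rule integral_mono')
    show "integrable ?P (\<lambda>\<omega>. d + Y \<omega> ^ 2 / d)" using Y2i by simp
    show "\<bar>Y \<omega>\<bar> \<le> d + Y \<omega> ^ 2 / d" for \<omega> by (rule abs_le_quad[OF d0])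
    show "0 \<le> d + Y \<omega> ^ 2 / d" for \<omega> using d0 by (simp add: add_nonneg_nonneg)
  qed
  also have "\<dots> = d + (\<integral>\<omega>. Y \<omega> ^ 2 \<partial>?P) / d"
    using Y2i by (simp add: PS.prob_space)
  also have "\<dots> \<le> d + (1 / real n) / d"
    using IY2 d0 by (intro add_left_mono divide_right_mono) auto
  also have "\<dots> = 2 / sqrt (real n)"
  proof -
    have "sqrt (real n) * sqrt (real n) = real n" by simp
    then show ?thesis using n unfolding d_def by (simp add: field_simps)
  qed
  finally show ?thesis unfolding Y_def .
qed



lemma pow_decay:
  fixes p :: real and B r k :: nat
  assumes p0: "0 \<le> p" and p1: "p < 1" and lr: "log_ratio k p \<le> ereal (real B)"
    and r: "2 * B \<le> r" and r1: "1 \<le> r"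
  shows "p ^ r \<le> 1 / (real k + 1)^2"
proof (cases "p = 0")
  case True then show ?thesis using r1 by (simp add: power_0_left)
next
  case False
  then have pp: "0 < p" using p0 by simp
  have lpos: "0 < ln (1 / p)" using pp p1 by (simp add: ln_div)
  have "log_ratio k p = ereal (ln (real k + 1) / ln (1 / p))"
    unfolding log_ratio_def using False lpos by (simp add: ereal_divide)
  then have "ln (real k + 1) / ln (1 / p) \<le> real B" using lr by simp
  then have A: "ln (real k + 1) \<le> real B * ln (1 / p)" using lpos by (simp add: divide_le_eq)
  have lnp: "ln (1/p) = - ln p" using pp by (simp add: ln_div)
  have "ln (p ^ r) = real r * ln p" using pp by (simp add: ln_realpow)
  also have "\<dots> \<le> real (2 * B) * ln p"
    using r lnp lpos by (intro mult_right_mono_neg) auto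
  also have "\<dots> \<le> - 2 * ln (real k + 1)" using A lnp by simp
  also have "\<dots> = ln (1 / (real k + 1)^2)" by (simp add: ln_div ln_realpow)
  finally have "ln (p ^ r) \<le> ln (1 / (real k + 1)^2)" .
  then show ?thesis using pp by (subst (asm) ln_le_cancel_iff) auto
qed

lemma cyl_measure:
  fixes n :: nat and S :: "nat set" and E :: "'a set"
  assumes P: "prob_space M" and E: "E \<in> sets M" and S: "S \<subseteq> {..<n}"
  shows "measure (PiM {..<n} (\<lambda>_. M)) (PiE {..<n} (\<lambda>i. if i \<in> S then E else space M)) = measure M E ^ card S"
proof -
  interpret prob_space M by fact
  interpret PP: product_prob_space "\<lambda>_::nat. M" by (rule product_prob_spaceI) (rule P)
  have "emeasure (PiM {..<n} (\<lambda>_. M)) (PiE {..<n} (\<lambda>i. if i \<in> S then E else space M))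
      = (\<Prod>i\<in>{..<n}. emeasure M (if i \<in> S then E else space M))"
    by (rule PP.emeasure_PiM) (auto simp: E)
  also have "\<dots> = (\<Prod>i\<in>{..<n}. ennreal (if i \<in> S then measure M E else 1))"
    by (intro prod.cong refl) (auto simp: emeasure_eq_measure prob_space)
  also have "\<dots> = ennreal (\<Prod>i\<in>{..<n}. (if i \<in> S then measure M E else 1))"
    by (rule prod_ennreal) auto
  also have "(\<Prod>i\<in>{..<n}. (if i \<in> S then measure M E else 1)) = (\<Prod>i\<in>{..<n} \<inter> S. measure M E)"
    by (rule prod.inter_restrict[symmetric]) simp
  also have "\<dots> = measure M E ^ card S" using S by (simp add: Int_absorb1)
  finally show ?thesis by (simp add: measure_def)
qed

lemma tail_bound:
  fixes n m :: nat and E :: "nat \<Rightarrow> 'a set"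
  assumes P: "prob_space M" and E: "\<And>k. E k \<in> sets M"
    and sm: "summable (\<lambda>k. measure M (E k) ^ m)"
  shows "measure (PiM {..<n} (\<lambda>_. M))
     (\<Union>k. \<Union>S\<in>{S. S \<subseteq> {..<n} \<and> card S = m}. PiE {..<n} (\<lambda>i. if i \<in> S then E k else space M))
     \<le> 2 ^ n * (\<Sum>k. measure M (E k) ^ m)"
proof -
  interpret prob_space M by fact
  interpret PS: prob_space "PiM {..<n} (\<lambda>_. M)" by (rule prob_space_PiM) (rule P)
  let ?P = "PiM {..<n} (\<lambda>_. M)"
  let ?Ss = "{S. S \<subseteq> {..<n} \<and> card S = m}"
  define B where "B = (\<lambda>k. \<Union>S\<in>?Ss. PiE {..<n} (\<lambda>i. if i \<in> S then E k else space M))"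
  have finSs: "finite ?Ss" by (rule finite_subset[of _ "Pow {..<n}"]) auto
  have cardSs: "card ?Ss \<le> 2 ^ n"
  proof -
    have "card ?Ss \<le> card (Pow {..<n::nat})" by (rule card_mono) auto
    then show ?thesis by (simp add: card_Pow)
  qed
  have Cs: "PiE {..<n} (\<lambda>i. if i \<in> S then E k else space M) \<in> sets ?P" for S k
    by (rule sets_PiM_I_finite) (auto simp: E)
  have Bs: "B k \<in> sets ?P" for k unfolding B_def using finSs Cs by (intro sets.finite_UN) auto
  have Bm: "measure ?P (B k) \<le> 2 ^ n * measure M (E k) ^ m" for k
  proof -
    have "measure ?P (B k) \<le> (\<Sum>S\<in>?Ss. measure ?P (PiE {..<n} (\<lambda>i. if i \<in> S then E k else space M)))"
      unfolding B_def by (rule measure_UNION_le[OF finSs]) (rule Cs)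
    also have "\<dots> = (\<Sum>S\<in>?Ss. measure M (E k) ^ m)"
      by (intro sum.cong refl) (auto simp: cyl_measure[OF P E])
    also have "\<dots> = real (card ?Ss) * measure M (E k) ^ m" by simp
    also have "\<dots> \<le> 2 ^ n * measure M (E k) ^ m"
      using cardSs by (intro mult_right_mono) (auto simp: numeral_power_le_of_nat_cancel_iff[symmetric])
    finally show ?thesis .
  qed
  have smB: "summable (\<lambda>k. measure ?P (B k))"
    by (rule summable_comparison_test[where g="\<lambda>k. 2 ^ n * measure M (E k) ^ m"])
       (use Bm sm in \<open>auto intro: summable_mult\<close>)
  have "measure ?P (\<Union>k. B k) \<le> (\<Sum>k. measure ?P (B k))"
    by (rule PS.finite_measure_subadditive_countably) (use Bs smB in auto)
  also have "\<dots> \<le> (\<Sum>k. 2 ^ n * measure M (E k) ^ m)"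
    by (rule suminf_le) (use Bm smB sm in \<open>auto intro: summable_mult\<close>)
  also have "\<dots> = 2 ^ n * (\<Sum>k. measure M (E k) ^ m)"
    using suminf_mult[OF sm] by simp
  finally show ?thesis unfolding B_def .
qed



lemma ind_bound:
  assumes "{\<omega> \<in> space M. X \<omega> a \<noteq> X \<omega> b} \<subseteq> (\<Union>k\<in>Ka. E k)" and "finite Ka" and "y \<in> space M"
  shows "\<bar>of_bool (X y a) - of_bool (X y b)\<bar> \<le> (\<Sum>k\<in>Ka. indicator (E k) y :: real)"
proof (cases "X y a = X y b")
  case True then show ?thesis by (simp add: sum_nonneg)
next
  case False
  then obtain k where k: "k \<in> Ka" "y \<in> E k" using assms by blast
  have "indicator (E k) y \<le> (\<Sum>k\<in>Ka. indicator (E k) y :: real)"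
    by (rule member_le_sum) (use k assms(2) in auto)
  then show ?thesis using False k by (cases "X y a") auto
qed

lemma delta_bound:
  fixes K m n :: nat and \<epsilon> :: real and E :: "nat \<Rightarrow> 'w set"
  assumes P: "prob_space M" and XM: "X \<in> measurable M bin_seq" and mu: "\<mu> = distr M bin_seq X"
    and J: "finite J" and Es: "\<And>k. E k \<in> sets M" and Ep: "\<And>k. measure M (E k) \<le> \<epsilon>"
    and cov: "\<And>i. \<exists>j\<in>J. \<exists>Ka :: nat set. finite Ka \<and> card Ka \<le> K \<and>
                      {\<omega> \<in> space M. X \<omega> i \<noteq> X \<omega> j} \<subseteq> (\<Union>k\<in>Ka. E k)"
    and n: "n > 0"
  shows "Delta n \<mu> \<le> real (card J) * (2 / sqrt n) + real K * (real m / real n)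
     + real K * measure (PiM {..<n} (\<lambda>_. M))
         (\<Union>k. \<Union>S\<in>{S. S \<subseteq> {..<n} \<and> card S = m}. PiE {..<n} (\<lambda>i. if i \<in> S then E k else space M))
     + real K * \<epsilon>"
proof -
  interpret prob_space M by fact
  interpret PS: prob_space "PiM {..<n} (\<lambda>_. M)" by (rule prob_space_PiM) (rule P)
  let ?P = "PiM {..<n} (\<lambda>_. M)"
  define A where "A = (\<Union>k. \<Union>S\<in>{S. S \<subseteq> {..<n} \<and> card S = m}. PiE {..<n} (\<lambda>i. if i \<in> S then E k else space M))"
  define p where "p = (\<lambda>j. \<integral>y. of_bool (X y j) \<partial>M :: real)"
  define av where "av = (\<lambda>j \<omega>. (\<Sum>i<n. of_bool (X (\<omega> i) j)) / real n :: real)"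
  have e0: "0 \<le> \<epsilon>" using Ep[of 0] measure_nonneg[of M "E 0"] by linarith
  have finSs: "finite {S. S \<subseteq> {..<n} \<and> card S = m}" by (rule finite_subset[of _ "Pow {..<n}"]) auto
  have C: "(\<Union>S\<in>{S. S \<subseteq> {..<n} \<and> card S = m}. PiE {..<n} (\<lambda>i. if i \<in> S then E k else space M)) \<in> sets ?P" for k
    using finSs by (intro sets.finite_UN sets_PiM_I_finite) (auto simp: Es)
  have As: "A \<in> sets ?P"
    unfolding A_def by (rule sets.countable_UN) (use C in auto)
  have sp: "\<omega> i \<in> space M" if "\<omega> \<in> space ?P" "i < n" for \<omega> i
    using that by (auto simp: space_PiM PiE_iff)
  have avm: "av j \<in> borel_measurable ?P" for j
  proof -
    have "(\<lambda>\<omega>. of_bool (X (\<omega> i) j) :: real) \<in> borel_measurable ?P" if "i < n" for i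
    proof -
      have "(\<lambda>\<omega>. \<omega> i) \<in> measurable ?P M"
        using measurable_component_singleton[of i "{..<n}" "\<lambda>_. M"] that by simp
      then show ?thesis using X_comp_borel[OF XM, of j] by (rule measurable_compose)
    qed
    then show ?thesis unfolding av_def by (intro borel_measurable_divide borel_measurable_sum) auto
  qed
  have avb: "0 \<le> av j \<omega>" "av j \<omega> \<le> 1" for j \<omega>
    unfolding av_def using avg_bounds[of "\<lambda>i. X (\<omega> i) j" n] by auto
  have pb: "0 \<le> p j" "p j \<le> 1" for j unfolding p_def using p_bounds[OF P XM] by auto
  have dev_int: "integrable ?P (\<lambda>\<omega>. \<bar>av j \<omega> - p j\<bar>)" for j
  proof (rule PS.integrable_const_bound[where B=1])
    show "AE x in ?P. norm \<bar>av j x - p j\<bar> \<le> 1"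
    proof (rule AE_I2)
      fix x
      have "\<bar>av j x - p j\<bar> \<le> 1" using avb[of j x] pb[of j] by (auto simp: abs_le_iff)
      then show "norm \<bar>av j x - p j\<bar> \<le> 1" by simp
    qed
  qed (use avm in simp)
  have dev: "(\<integral>\<omega>. \<bar>av j \<omega> - p j\<bar> \<partial>?P) \<le> 2 / sqrt n" for j
  proof -
    have "(\<lambda>y. of_bool (X y j) :: real) \<in> borel_measurable M" by (rule X_comp_borel[OF XM])
    from mean_dev[OF P this _ n] show ?thesis unfolding av_def p_def by simp
  qed
  define G where "G = (\<lambda>\<omega>. (\<Sum>b\<in>J. \<bar>av b \<omega> - p b\<bar>) + real K * (real m / real n)
      + real K * indicator A \<omega> + real K * \<epsilon>)"
  have Gi: "integrable ?P G"
    unfolding G_def using dev_int As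
    by (intro Bochner_Integration.integrable_add Bochner_Integration.integrable_sum
          integrable_mult_right integrable_real_indicator) (auto simp: PS.emeasure_eq_measure)
  have IG: "(\<integral>\<omega>. G \<omega> \<partial>?P) \<le> real (card J) * (2 / sqrt n) + real K * (real m / real n)
     + real K * measure ?P A + real K * \<epsilon>"
  proof -
    have "(\<integral>\<omega>. G \<omega> \<partial>?P) = (\<Sum>b\<in>J. (\<integral>\<omega>. \<bar>av b \<omega> - p b\<bar> \<partial>?P)) + real K * (real m / real n)
      + real K * measure ?P A + real K * \<epsilon>"
    proof -
      have i1: "integrable ?P (\<lambda>\<omega>. \<Sum>b\<in>J. \<bar>av b \<omega> - p b\<bar>)"
        using dev_int by (intro Bochner_Integration.integrable_sum) auto
      have i3: "integrable ?P (\<lambda>\<omega>. real K * indicator A \<omega>)"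
        using As by (intro integrable_mult_right integrable_real_indicator) (auto simp: PS.emeasure_eq_measure)
      have i12: "integrable ?P (\<lambda>\<omega>. (\<Sum>b\<in>J. \<bar>av b \<omega> - p b\<bar>) + real K * (real m / real n))"
        using i1 by simp
      have i123: "integrable ?P (\<lambda>\<omega>. (\<Sum>b\<in>J. \<bar>av b \<omega> - p b\<bar>) + real K * (real m / real n) + real K * indicator A \<omega>)"
        using i12 i3 by (rule Bochner_Integration.integrable_add)
      have "(\<integral>\<omega>. G \<omega> \<partial>?P) = (\<integral>\<omega>. (\<Sum>b\<in>J. \<bar>av b \<omega> - p b\<bar>) + real K * (real m / real n) + real K * indicator A \<omega> \<partial>?P)
         + (\<integral>\<omega>. real K * \<epsilon> \<partial>?P)"
        unfolding G_def by (rule Bochner_Integration.integral_add[OF i123 PS.integrable_const])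
      also have "(\<integral>\<omega>. (\<Sum>b\<in>J. \<bar>av b \<omega> - p b\<bar>) + real K * (real m / real n) + real K * indicator A \<omega> \<partial>?P)
         = (\<integral>\<omega>. (\<Sum>b\<in>J. \<bar>av b \<omega> - p b\<bar>) + real K * (real m / real n) \<partial>?P) + (\<integral>\<omega>. real K * indicator A \<omega> \<partial>?P)"
        by (rule Bochner_Integration.integral_add[OF i12 i3])
      also have "(\<integral>\<omega>. (\<Sum>b\<in>J. \<bar>av b \<omega> - p b\<bar>) + real K * (real m / real n) \<partial>?P)
         = (\<integral>\<omega>. (\<Sum>b\<in>J. \<bar>av b \<omega> - p b\<bar>) \<partial>?P) + (\<integral>\<omega>. real K * (real m / real n) \<partial>?P)"
        by (rule Bochner_Integration.integral_add[OF i1 PS.integrable_const])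
      also have "(\<integral>\<omega>. (\<Sum>b\<in>J. \<bar>av b \<omega> - p b\<bar>) \<partial>?P) = (\<Sum>b\<in>J. (\<integral>\<omega>. \<bar>av b \<omega> - p b\<bar> \<partial>?P))"
        by (rule Bochner_Integration.integral_sum) (rule dev_int)
      also have "(\<integral>\<omega>. real K * indicator A \<omega> \<partial>?P) = real K * measure ?P A"
        using As by simp
      finally show ?thesis by (simp add: PS.prob_space)
    qed
    also have "(\<Sum>b\<in>J. (\<integral>\<omega>. \<bar>av b \<omega> - p b\<bar> \<partial>?P)) \<le> (\<Sum>b\<in>J. 2 / sqrt n)"
      by (intro sum_mono dev)
    finally show ?thesis by simp
  qed
  have cnt: "(\<Sum>i<n. indicator (E k) (\<omega> i)) / real n \<le> real m / real n + indicator A \<omega>"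
    if om: "\<omega> \<in> space ?P" for \<omega> k
  proof (cases "\<omega> \<in> A")
    case True
    have "(\<Sum>i<n. indicator (E k) (\<omega> i) :: real) \<le> (\<Sum>i<n. 1)" by (intro sum_mono) (auto simp: indicator_def)
    then have "(\<Sum>i<n. indicator (E k) (\<omega> i)) / real n \<le> 1" using n by (simp add: divide_le_eq)
    moreover have "0 \<le> real m / real n" by simp
    moreover have "indicator A \<omega> = (1::real)" using True by simp
    ultimately show ?thesis by linarith
  next
    case False
    have eq: "(\<Sum>i<n. indicator (E k) (\<omega> i) :: real) = real (card {i. i < n \<and> \<omega> i \<in> E k})"
    proof -
      have "(\<Sum>i<n. indicator (E k) (\<omega> i) :: real) = (\<Sum>i<n. of_bool (\<omega> i \<in> E k))"
        by (simp add: indicator_def)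
      also have "\<dots> = real (card ({..<n} \<inter> {i. \<omega> i \<in> E k}))" by simp
      also have "{..<n} \<inter> {i. \<omega> i \<in> E k} = {i. i < n \<and> \<omega> i \<in> E k}" by auto
      finally show ?thesis .
    qed
    have "card {i. i < n \<and> \<omega> i \<in> E k} < m"
    proof (rule ccontr)
      assume "\<not> card {i. i < n \<and> \<omega> i \<in> E k} < m"
      then obtain S where S: "S \<subseteq> {i. i < n \<and> \<omega> i \<in> E k}" "card S = m"
        by (metis obtain_subset_with_card_n not_less)
      have "\<omega> \<in> PiE {..<n} (\<lambda>i. if i \<in> S then E k else space M)"
        using om S(1) by (auto simp: space_PiM PiE_iff)
      then have "\<omega> \<in> A" unfolding A_def using S by blast
      then show False using False by simp
    qed
    then show ?thesis using False eq n by (simp add: divide_right_mono)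
  qed
  have pw: "\<bar>av a \<omega> - p a\<bar> \<le> G \<omega>" if om: "\<omega> \<in> space ?P" for a \<omega>
  proof -
    obtain b Ka where b: "b \<in> J" and Ka: "finite Ka" "card Ka \<le> K"
      and sub: "{\<omega> \<in> space M. X \<omega> a \<noteq> X \<omega> b} \<subseteq> (\<Union>k\<in>Ka. E k)"
      using cov[of a] by blast
    have ib: "\<bar>of_bool (X y a) - of_bool (X y b)\<bar> \<le> (\<Sum>k\<in>Ka. indicator (E k) y :: real)"
      if "y \<in> space M" for y
      by (rule ind_bound[OF sub Ka(1) that])
    have pab: "\<bar>p a - p b\<bar> \<le> real K * \<epsilon>"
    proof -
      have ia: "integrable M (\<lambda>y. of_bool (X y a) :: real)" "integrable M (\<lambda>y. of_bool (X y b) :: real)"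
        using p_bounds[OF P XM] by auto
      have isum: "integrable M (\<lambda>y. \<Sum>k\<in>Ka. indicator (E k) y :: real)"
        using Es by (intro Bochner_Integration.integrable_sum integrable_real_indicator) (auto simp: emeasure_eq_measure)
      have "p a - p b = (\<integral>y. of_bool (X y a) - of_bool (X y b) \<partial>M)"
        unfolding p_def using ia by simp
      then have "\<bar>p a - p b\<bar> \<le> (\<integral>y. \<bar>of_bool (X y a) - of_bool (X y b)\<bar> \<partial>M :: real)"
        by (simp only: integral_abs_bound)
      also have "\<dots> \<le> (\<integral>y. (\<Sum>k\<in>Ka. indicator (E k) y) \<partial>M)"
        using ia isum ib by (intro integral_mono) auto
      also have "\<dots> = (\<Sum>k\<in>Ka. measure M (E k))"
        using Es by (simp add: Bochner_Integration.integral_sum integrable_real_indicator emeasure_eq_measure)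
      also have "\<dots> \<le> (\<Sum>k\<in>Ka. \<epsilon>)" by (intro sum_mono Ep)
      also have "\<dots> = real (card Ka) * \<epsilon>" by simp
      also have "\<dots> \<le> real K * \<epsilon>" using Ka(2) e0 by (intro mult_right_mono) auto
      finally show ?thesis .
    qed
    have avab: "\<bar>av a \<omega> - av b \<omega>\<bar> \<le> real K * (real m / real n) + real K * indicator A \<omega>"
    proof -
      have "av a \<omega> - av b \<omega> = (\<Sum>i<n. of_bool (X (\<omega> i) a) - of_bool (X (\<omega> i) b)) / real n"
        unfolding av_def by (simp add: sum_subtractf diff_divide_distrib)
      then have "\<bar>av a \<omega> - av b \<omega>\<bar> \<le> (\<Sum>i<n. \<bar>of_bool (X (\<omega> i) a) - of_bool (X (\<omega> i) b)\<bar>) / real n"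
        using n by (simp add: divide_right_mono sum_abs)
      also have "\<dots> \<le> (\<Sum>i<n. \<Sum>k\<in>Ka. indicator (E k) (\<omega> i)) / real n"
        using n sp[OF om] by (intro divide_right_mono sum_mono ib) auto
      also have "\<dots> = (\<Sum>k\<in>Ka. (\<Sum>i<n. indicator (E k) (\<omega> i)) / real n)"
        by (subst sum.swap) (simp add: sum_divide_distrib)
      also have "\<dots> \<le> (\<Sum>k\<in>Ka. real m / real n + indicator A \<omega>)"
        by (intro sum_mono cnt om)
      also have "\<dots> = real (card Ka) * (real m / real n + indicator A \<omega>)" by simp
      also have "\<dots> \<le> real K * (real m / real n + indicator A \<omega>)"
        using Ka(2) by (intro mult_right_mono) auto
      finally show ?thesis by (simp add: distrib_left)
    qed
    have "\<bar>av b \<omega> - p b\<bar> \<le> (\<Sum>b\<in>J. \<bar>av b \<omega> - p b\<bar>)"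
      by (rule member_le_sum) (use b J in auto)
    then show ?thesis unfolding G_def using pab avab by linarith
  qed
  have "Delta n \<mu> = (\<integral>\<omega>. (SUP j. \<bar>av j \<omega> - p j\<bar>) \<partial>?P)"
    unfolding transfer[OF P XM mu] av_def p_def ..
  also have "\<dots> \<le> (\<integral>\<omega>. G \<omega> \<partial>?P)"
  proof (rule integral_mono'[OF Gi])
    fix \<omega> assume om: "\<omega> \<in> space ?P"
    show "(SUP j. \<bar>av j \<omega> - p j\<bar>) \<le> G \<omega>" by (rule cSUP_least) (auto intro: pw[OF om])
    show "0 \<le> G \<omega>" using pw[OF om, of 0] by simp
  qed
  also note IG
  finally show ?thesis unfolding A_def .
qed



lemma Delta_nonneg:
  assumes P: "prob_space M" and XM: "X \<in> measurable M bin_seq" and mu: "\<mu> = distr M bin_seq X"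
  shows "0 \<le> Delta n \<mu>"
  unfolding transfer[OF P XM mu]
proof (rule integral_nonneg_AE, rule AE_I2)
  fix \<omega> :: "nat \<Rightarrow> 'a"
  let ?f = "\<lambda>j. \<bar>(\<Sum>i<n. of_bool (X (\<omega> i) j)) / real n - (\<integral>y. of_bool (X y j) \<partial>M)\<bar>"
  have b: "?f j \<le> 1" for j
    using p_bounds[OF P XM, of j] avg_bounds[of "\<lambda>i. X (\<omega> i) j" n] by linarith
  show "0 \<le> (SUP j. ?f j)"
  proof -
    have bd: "bdd_above (range ?f)" by (rule bdd_aboveI2[where M=1]) (rule b)
    show ?thesis by (rule cSUP_upper2[OF bd, of 0]) auto
  qed
qed

theorem theorem9:
  fixes M :: "'w measure" and X :: "'w \<Rightarrow> nat \<Rightarrow> bool" and \<mu> :: "(nat \<Rightarrow> bool) measure"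
  assumes "prob_space M"
    and "X \<in> measurable M bin_seq"
    and "\<mu> = distr M bin_seq X"
    and "totally_bounded_xi M X"
    and "\<exists>K::nat. K \<ge> 1 \<and>
           (\<forall>\<epsilon>::real. \<epsilon> > 0 \<longrightarrow>
              (\<exists>E :: nat \<Rightarrow> 'w set. \<exists>J :: nat set.
                 finite J \<and> (\<forall>k. E k \<in> sets M) \<and>
                 (\<forall>k. measure M (E k) \<le> \<epsilon>) \<and>
                 (SUP k. log_ratio k (measure M (E k))) < \<infinity> \<and>
                 (\<forall>i. \<exists>j\<in>J. \<exists>\<K> :: nat set. finite \<K> \<and> card \<K> \<le> K \<and>
                      {\<omega> \<in> space M. X \<omega> i \<noteq> X \<omega> j} \<subseteq> (\<Union>k\<in>\<K>. E k))))"
  shows "(\<lambda>n. Delta n \<mu>) \<longlonglongrightarrow> 0"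
proof -
  note P = assms(1) and XM = assms(2) and mu = assms(3)
  interpret prob_space M by (rule P)
  obtain K :: nat where K1: "K \<ge> 1" and H: "\<forall>\<epsilon>::real. \<epsilon> > 0 \<longrightarrow>
              (\<exists>E :: nat \<Rightarrow> 'w set. \<exists>J :: nat set.
                 finite J \<and> (\<forall>k. E k \<in> sets M) \<and>
                 (\<forall>k. measure M (E k) \<le> \<epsilon>) \<and>
                 (SUP k. log_ratio k (measure M (E k))) < \<infinity> \<and>
                 (\<forall>i. \<exists>j\<in>J. \<exists>\<K> :: nat set. finite \<K> \<and> card \<K> \<le> K \<and>
                      {\<omega> \<in> space M. X \<omega> i \<noteq> X \<omega> j} \<subseteq> (\<Union>k\<in>\<K>. E k)))"
    using assms(5) by blast
  show ?thesis
  proof (rule LIMSEQ_I)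
    fix \<eta> :: real assume \<eta>: "0 < \<eta>"
    define L :: nat where "L = nat \<lceil>6 * real K / \<eta>\<rceil> + 1"
    have L1: "1 \<le> L" by (simp add: L_def)
    have "6 * real K / \<eta> < real L" unfolding L_def by linarith
    then have "6 * real K < real L * \<eta>" using \<eta> by (simp add: divide_less_eq)
    then have KL: "3 * real K / real L < \<eta> / 2" using L1 by (simp add: divide_less_eq mult.commute)
    define \<epsilon> :: real where "\<epsilon> = (1/4) ^ L"
    have e0: "0 < \<epsilon>" by (simp add: \<epsilon>_def)
    have e1: "\<epsilon> < 1" unfolding \<epsilon>_def using L1 by (simp add: power_less_one_iff)
    have eL: "\<epsilon> \<le> 1 / real L"
    proof -
      have "real L < 2 ^ L" by (rule of_nat_less_two_power)
      also have "(2::real) ^ L \<le> 4 ^ L" by (rule power_mono) auto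
      finally have "real L \<le> 4 ^ L" by simp
      then show ?thesis unfolding \<epsilon>_def using L1 by (simp add: power_one_over frac_le)
    qed
    obtain E J where EJ: "finite J \<and> (\<forall>k. E k \<in> sets M) \<and> (\<forall>k. measure M (E k) \<le> \<epsilon>) \<and>
                 (SUP k. log_ratio k (measure M (E k))) < \<infinity> \<and>
                 (\<forall>i. \<exists>j\<in>J. \<exists>\<K> :: nat set. finite \<K> \<and> card \<K> \<le> K \<and>
                      {\<omega> \<in> space M. X \<omega> i \<noteq> X \<omega> j} \<subseteq> (\<Union>k\<in>\<K>. E k))"
      using H[rule_format, OF e0] by (elim exE) (rule that)
    have J: "finite J" using EJ by (elim conjE)
    have Es: "\<forall>k. E k \<in> sets M" using EJ by (elim conjE)
    have Ep: "\<forall>k. measure M (E k) \<le> \<epsilon>" using EJ by (elim conjE)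
    have Esup: "(SUP k. log_ratio k (measure M (E k))) < \<infinity>" using EJ by (elim conjE)
    have cov: "\<forall>i. \<exists>j\<in>J. \<exists>Ka :: nat set. finite Ka \<and> card Ka \<le> K \<and>
                      {\<omega> \<in> space M. X \<omega> i \<noteq> X \<omega> j} \<subseteq> (\<Union>k\<in>Ka. E k)" using EJ by (elim conjE)
    have "(SUP k. log_ratio k (measure M (E k))) \<noteq> \<infinity>" using Esup by simp
    then obtain Bn :: nat where SB: "(SUP k. log_ratio k (measure M (E k))) < ereal (real Bn)"
      using less_PInf_Ex_of_nat by blast
    have lrB: "log_ratio k (measure M (E k)) \<le> ereal (real Bn)" for k
    proof -
      have "log_ratio k (measure M (E k)) \<le> (SUP k. log_ratio k (measure M (E k)))" by (rule SUP_upper) simp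
      then show ?thesis using SB by simp
    qed
    have decay: "measure M (E k) ^ r \<le> 1 / (real k + 1)^2" if "2 * Bn \<le> r" "1 \<le> r" for k r
      using Ep e1 by (intro pow_decay[OF measure_nonneg _ lrB that]) (auto intro: le_less_trans)
    have sumS: "summable (\<lambda>k. 1 / (real k + 1)^2)"
    proof -
      have "summable (\<lambda>k. inverse (real k ^ 2))" by (rule inverse_power_summable) simp
      then have "summable (\<lambda>k. inverse (real (Suc k) ^ 2))" by (subst summable_Suc_iff)
      then show ?thesis by (simp add: inverse_eq_divide add.commute)
    qed
    define S where "S = (\<Sum>k. 1 / (real k + 1)^2)"
    have S0: "0 \<le> S" unfolding S_def using sumS by (intro suminf_nonneg) auto
    define u where "u = (\<lambda>n. real (card J) * (2 / sqrt (real n)) + real K * (2 / real L + 2 / real n)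
        + real K * ((1/2) ^ n * S) + real K * \<epsilon>)"
    define N0 where "N0 = 2 * Bn * L + 1"
    have bound: "Delta n \<mu> \<le> u n" if nN: "N0 \<le> n" for n
    proof -
      have n0: "n > 0" using nN by (simp add: N0_def)
      define r where "r = n div L + 1"
      define m where "m = 2 * r"
      have r1: "1 \<le> r" by (simp add: r_def)
      have rB: "2 * Bn \<le> r"
      proof -
        have "(2 * Bn * L) div L \<le> n div L" using nN by (intro div_le_mono) (simp add: N0_def)
        then show ?thesis using L1 by (simp add: r_def)
      qed
      have nLr: "n \<le> L * r"
      proof -
        have e: "n div L * L + n mod L = n" by (rule div_mult_mod_eq)
        have t: "n mod L < L" using L1 by simp
        have "L * r = n div L * L + L" unfolding r_def by (simp add: algebra_simps)
        then show ?thesis using e t by linarith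
      qed
      have Es': "\<And>k. E k \<in> sets M" using Es by blast
      have Ep': "\<And>k. measure M (E k) \<le> \<epsilon>" using Ep by blast
      have cov': "\<And>i. \<exists>j\<in>J. \<exists>Ka :: nat set. finite Ka \<and> card Ka \<le> K \<and>
                      {\<omega> \<in> space M. X \<omega> i \<noteq> X \<omega> j} \<subseteq> (\<Union>k\<in>Ka. E k)" using cov by blast
      let ?A = "(\<Union>k. \<Union>S\<in>{S. S \<subseteq> {..<n} \<and> card S = m}. PiE {..<n} (\<lambda>i. if i \<in> S then E k else space M))"
      have D: "Delta n \<mu> \<le> real (card J) * (2 / sqrt n) + real K * (real m / real n)
         + real K * measure (PiM {..<n} (\<lambda>_. M)) ?A + real K * \<epsilon>"
        by (rule delta_bound[OF P XM mu J Es' Ep' cov' n0])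
      have mn: "real m / real n \<le> 2 / real L + 2 / real n"
      proof -
        have "real (n div L) \<le> real n / real L" by (rule of_nat_div_le_of_nat)
        then have "real (n div L) / real n \<le> 1 / real L" using n0 L1 by (simp add: divide_le_eq field_simps)
        moreover have "real m / real n = 2 * (real (n div L) / real n) + 2 / real n"
          unfolding m_def r_def by (simp add: add_divide_distrib)
        ultimately show ?thesis by linarith
      qed
      have pm: "measure M (E k) ^ m \<le> \<epsilon> ^ r * (1 / (real k + 1)^2)" for k
      proof -
        have "measure M (E k) ^ m = measure M (E k) ^ r * measure M (E k) ^ r"
          unfolding m_def by (simp add: mult_2 power_add)
        also have "\<dots> \<le> \<epsilon> ^ r * (1 / (real k + 1)^2)"
          using Ep' decay[OF rB r1] e0 by (intro mult_mono power_mono) auto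
        finally show ?thesis .
      qed
      have smr: "summable (\<lambda>k. \<epsilon> ^ r * (1 / (real k + 1)^2))" using sumS by (rule summable_mult)
      have sm: "summable (\<lambda>k. measure M (E k) ^ m)"
        by (rule summable_comparison_test[OF _ smr]) (use pm in auto)
      have "measure (PiM {..<n} (\<lambda>_. M)) ?A \<le> 2 ^ n * (\<Sum>k. measure M (E k) ^ m)"
        by (rule tail_bound[OF P Es' sm])
      also have "(\<Sum>k. measure M (E k) ^ m) \<le> (\<Sum>k. \<epsilon> ^ r * (1 / (real k + 1)^2))"
        by (rule suminf_le[OF pm sm smr])
      also have "\<dots> = \<epsilon> ^ r * S" unfolding S_def by (rule suminf_mult[OF sumS])
      also have "\<epsilon> ^ r \<le> (1/4) ^ n"
        unfolding \<epsilon>_def power_mult[symmetric] using nLr by (intro power_decreasing) auto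
      finally have mA: "measure (PiM {..<n} (\<lambda>_. M)) ?A \<le> 2 ^ n * ((1/4) ^ n * S)"
        using S0 by (simp add: mult_left_mono mult_right_mono)
      have "(2::real) ^ n * ((1/4) ^ n * S) = (1/2) ^ n * S"
        by (simp add: power_mult_distrib[symmetric] mult.assoc[symmetric])
      with mA have mA': "measure (PiM {..<n} (\<lambda>_. M)) ?A \<le> (1/2) ^ n * S" by simp
      have "real K * (real m / real n) \<le> real K * (2 / real L + 2 / real n)"
        using mn by (intro mult_left_mono) auto
      moreover have "real K * measure (PiM {..<n} (\<lambda>_. M)) ?A \<le> real K * ((1/2) ^ n * S)"
        using mA' by (intro mult_left_mono) auto
      ultimately show ?thesis using D unfolding u_def by linarith
    qed
    have t1: "(\<lambda>n. 2 / sqrt (real n)) \<longlonglongrightarrow> 0" by real_asymp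
    have t2: "(\<lambda>n. 2 / real n) \<longlonglongrightarrow> (0::real)" by real_asymp
    have t3: "(\<lambda>n. (1/2::real) ^ n) \<longlonglongrightarrow> 0" by real_asymp
    have "u \<longlonglongrightarrow> real (card J) * 0 + real K * (2 / real L + 0) + real K * (0 * S) + real K * \<epsilon>"
      unfolding u_def by (intro tendsto_add tendsto_mult tendsto_const t1 t2 t3)
    then have ulim: "u \<longlonglongrightarrow> real K * (2 / real L) + real K * \<epsilon>" by simp
    have "real K * \<epsilon> \<le> real K * (1 / real L)" using eL by (intro mult_left_mono) auto
    then have "real K * (2 / real L) + real K * \<epsilon> \<le> 3 * real K / real L" by simp
    then have lt: "real K * (2 / real L) + real K * \<epsilon> < \<eta>" using KL \<eta> by linarith
    have "eventually (\<lambda>n. u n < \<eta>) sequentially" by (rule order_tendstoD(2)[OF ulim lt])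
    then obtain N1 where N1: "\<And>n. N1 \<le> n \<Longrightarrow> u n < \<eta>" by (auto simp: eventually_sequentially)
    show "\<exists>no. \<forall>n\<ge>no. norm (Delta n \<mu> - 0) < \<eta>"
    proof (intro exI allI impI)
      fix n assume "max N0 N1 \<le> n"
      then have "Delta n \<mu> < \<eta>" using bound[of n] N1[of n] by simp
      moreover have "0 \<le> Delta n \<mu>" by (rule Delta_nonneg[OF P XM mu])
      ultimately show "norm (Delta n \<mu> - 0) < \<eta>" by simp
    qed
  qed
qed


end
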